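(* Let $N\ge2$, $L\ge1$, and let $a_k(\xi_i,\xi_j)$, $k=1,\dots,N$, be nonvanishing functions with $a_k(\xi_i,\xi_j)a_k(\xi_j,\xi_i)=1$. On $V_1\otimes\cdots\otimes V_L$ ($V_j\cong\mathbb{C}^N$) define the diagonal operators $$\mathcal N_{ij}=\mathcal I_i\otimes\mathcal I_j-\sum_{k=1}^N e^{(kk)}_i\otimes e^{(kk)}_j+\sum_{k=1}^N\sqrt{a_k(\xi_i,\xi_j)}\,e^{(kk)}_i\otimes e^{(kk)}_j,\qquad \mathcal R_{ij}=\mathcal I_i\otimes\mathcal I_j-\sum_{k=1}^N e^{(kk)}_i\otimes e^{(kk)}_j+\sum_{k=1}^N a_k(\xi_i,\xi_j)\,e^{(kk)}_i\otimes e^{(kk)}_j,$$ and $\mathcal N_{1\dots L}=\mathcal N_{(L-1)L}\mathcal N_{L-2,(L-1)L}\cdots\mathcal N_{1,2\dots L}$ with $\mathcal N_{i,(i+1)\dots L}=\mathcal N_{iL}\mathcal N_{i(L-1)}\cdots\mathcal N_{i(i+1)}$. Then for all $\sigma\in S_L$, $$\mathcal N^{-1}_{\sigma(1\dots L)}\,\mathcal N_{1\dots L}=\mathcal R^{\{\sigma\}}_{1\dots L},$$ where $\mathcal R^{\{\sigma\}}_{1\dots L}=P^{\{\sigma\}}_{1\dots L}\hat{\mathcal R}^{\{\sigma^{-1}\}}_{1\dots L}$, with, for a minimal decomposition $\sigma=\sigma_{\alpha_p(\alpha_p+1)}\cdots\sigma_{\alpha_1(\alpha_1+1)}$ into adjacent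 transpositions, $P^{\{\sigma\}}_{1\dots L}=P_{\alpha_p(\alpha_p+1)}\cdots P_{\alpha_1(\alpha_1+1)}$, $\hat{\mathcal R}^{\{\sigma^{-1}\}}_{1\dots L}=\hat{\mathcal R}_{\alpha_1}\hat{\mathcal R}_{\alpha_2}\cdots\hat{\mathcal R}_{\alpha_p}$ and $\hat{\mathcal R}_\alpha=P_{\alpha(\alpha+1)}\mathcal R_{\alpha(\alpha+1)}(\xi_\alpha,\xi_{\alpha+1})$.
   Context: $e^{(kk)}_j$ is the $N\times N$ diagonal Weyl matrix acting on $V_j$, $\mathcal I_j$ the identity on $V_j$, and $P_{\alpha(\alpha+1)}$ the operator permuting the tensor factors $V_\alpha$ and $V_{\alpha+1}$. For an operator $X_{1\dots L}(\xi_1,\dots,\xi_L)$, $X_{\sigma(1\dots L)}$ denotes $X_{\sigma(1)\dots\sigma(L)}(\xi_{\sigma(1)},\dots,\xi_{\sigma(L)})=P^{\{\sigma\}}_{1\dots L}X_{1\dots L}P^{\{\sigma^{-1}\}}_{1\dots L}$. Square roots are chosen so that $\sqrt{a_k(\xi_i,\xi_j)}\sqrt{a_k(\xi_j,\xi_i)}=1$. *)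

theory Defs
  imports Complex_Main "HOL-Combinatorics.Permutations"
begin

text \<open>Sites are 0..L-1 (paper: 1..L), colours 0..N-1 (paper: 1..N).
  A basis configuration of V_1 (x) ... (x) V_L is a map c from sites to colours;
  a vector is a function on configurations, an operator a map on vectors.\<close>

type_synonym cfg = "nat \<Rightarrow> nat"
type_synonym vec = "cfg \<Rightarrow> complex"
type_synonym oper = "vec \<Rightarrow> vec"

definition cfgs :: "nat \<Rightarrow> nat \<Rightarrow> cfg set" where
  "cfgs N L = {c. (\<forall>i<L. c i < N) \<and> (\<forall>i. L \<le> i \<longrightarrow> c i = 0)}"

definition diag_op :: "(cfg \<Rightarrow> complex) \<Rightarrow> oper" where
  "diag_op d v = (\<lambda>c. d c * v c)"

definition eW :: "nat \<Rightarrow> nat \<Rightarrow> cfg \<Rightarrow> complex" where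
  "eW k i c = (if c i = k then 1 else 0)"

definition two_site :: "nat \<Rightarrow> (nat \<Rightarrow> complex \<Rightarrow> complex \<Rightarrow> complex)
    \<Rightarrow> nat \<Rightarrow> nat \<Rightarrow> complex \<Rightarrow> complex \<Rightarrow> oper" where
  "two_site N b i j x y = diag_op (\<lambda>c. 1 - (\<Sum>k<N. eW k i c * eW k j c)
                                         + (\<Sum>k<N. b k x y * eW k i c * eW k j c))"

definition Nop :: "nat \<Rightarrow> (nat \<Rightarrow> complex \<Rightarrow> complex \<Rightarrow> complex) \<Rightarrow> (nat \<Rightarrow> complex)
    \<Rightarrow> nat \<Rightarrow> nat \<Rightarrow> oper" where
  "Nop N sq \<xi> i j = two_site N sq i j (\<xi> i) (\<xi> j)"

definition Nrow :: "nat \<Rightarrow> nat \<Rightarrow> (nat \<Rightarrow> complex \<Rightarrow> complex \<Rightarrow> complex) \<Rightarrow> (nat \<Rightarrow> complex)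
    \<Rightarrow> (nat \<Rightarrow> nat) \<Rightarrow> nat \<Rightarrow> oper" where
  "Nrow N L sq \<xi> s i = fold (\<lambda>j acc. Nop N sq \<xi> (s i) (s j) \<circ> acc) [Suc i..<L] id"

text \<open>N_{s(1...L)} = N_{s(L-1)s(L)} ... N_{s(1),s(2...L)}; N_{1...L} is the case s = id,
  and N_{sigma(1...L)} = N_{sigma(1)...sigma(L)}(xi_sigma(1),...,xi_sigma(L)) the case s = sigma.\<close>
definition Nprod :: "nat \<Rightarrow> nat \<Rightarrow> (nat \<Rightarrow> complex \<Rightarrow> complex \<Rightarrow> complex) \<Rightarrow> (nat \<Rightarrow> complex)
    \<Rightarrow> (nat \<Rightarrow> nat) \<Rightarrow> oper" where
  "Nprod N L sq \<xi> s = fold (\<lambda>i acc. Nrow N L sq \<xi> s i \<circ> acc) [0..<L] id"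

definition Pop :: "nat \<Rightarrow> oper" where
  "Pop \<alpha> v = (\<lambda>c. v (c \<circ> transpose \<alpha> (Suc \<alpha>)))"

definition perm_of :: "nat list \<Rightarrow> nat \<Rightarrow> nat" where
  "perm_of \<alpha>s = fold (\<lambda>\<alpha> acc. transpose \<alpha> (Suc \<alpha>) \<circ> acc) \<alpha>s id"

definition adj_decomp :: "nat \<Rightarrow> (nat \<Rightarrow> nat) \<Rightarrow> nat list \<Rightarrow> bool" where
  "adj_decomp L \<sigma> \<alpha>s \<longleftrightarrow> (\<forall>\<alpha>\<in>set \<alpha>s. Suc \<alpha> < L) \<and> \<sigma> = perm_of \<alpha>s"

definition min_adj_decomp :: "nat \<Rightarrow> (nat \<Rightarrow> nat) \<Rightarrow> nat list \<Rightarrow> bool" where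
  "min_adj_decomp L \<sigma> \<alpha>s \<longleftrightarrow> adj_decomp L \<sigma> \<alpha>s \<and>
     (\<forall>\<beta>s. adj_decomp L \<sigma> \<beta>s \<longrightarrow> length \<alpha>s \<le> length \<beta>s)"

definition Pperm :: "nat list \<Rightarrow> oper" where
  "Pperm \<alpha>s = fold (\<lambda>\<alpha> acc. Pop \<alpha> \<circ> acc) \<alpha>s id"

definition Rhat :: "nat \<Rightarrow> (nat \<Rightarrow> complex \<Rightarrow> complex \<Rightarrow> complex) \<Rightarrow> nat \<Rightarrow> complex \<Rightarrow> complex \<Rightarrow> oper" where
  "Rhat N a \<alpha> x y = Pop \<alpha> \<circ> two_site N a \<alpha> (Suc \<alpha>) x y"

text \<open>The spectral parameters carried by
  each Rhat_{alpha_j} are those of the spaces currently sitting at positions alpha_j, alpha_j+1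
  after the factors Rhat_{alpha_{j+1}} ... Rhat_{alpha_p} (applied first) have permuted them,
  i.e. xi relabelled by sigma_{alpha_p} o ... o sigma_{alpha_{j+1}}.\<close>
fun Rhat_chain :: "nat \<Rightarrow> (nat \<Rightarrow> complex \<Rightarrow> complex \<Rightarrow> complex) \<Rightarrow> (nat \<Rightarrow> complex)
    \<Rightarrow> nat list \<Rightarrow> oper" where
  "Rhat_chain N a \<xi> [] = id"
| "Rhat_chain N a \<xi> (\<alpha> # \<alpha>s) =
     Rhat N a \<alpha> (\<xi> (perm_of \<alpha>s \<alpha>)) (\<xi> (perm_of \<alpha>s (Suc \<alpha>))) \<circ> Rhat_chain N a \<xi> \<alpha>s"

definition Rsig :: "nat \<Rightarrow> (nat \<Rightarrow> complex \<Rightarrow> complex \<Rightarrow> complex) \<Rightarrow> (nat \<Rightarrow> complex)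
    \<Rightarrow> nat list \<Rightarrow> oper" where
  "Rsig N a \<xi> \<alpha>s = Pperm \<alpha>s \<circ> Rhat_chain N a \<xi> \<alpha>s"

end

theory Submission
  imports Defs
begin

lemma fold_comp_gen:
  fixes h :: "'x \<Rightarrow> 'b \<Rightarrow> 'b" and g :: "'b \<Rightarrow> 'b"
  shows "fold (\<lambda>x acc. h x \<circ> acc) xs g = fold (\<lambda>x acc. h x \<circ> acc) xs id \<circ> g"
proof (induction xs arbitrary: g)
  case Nil then show ?case by simp
next
  case (Cons x xs)
  have e1: "fold (\<lambda>x acc. h x \<circ> acc) (x # xs) g = fold (\<lambda>x acc. h x \<circ> acc) xs (h x \<circ> g)" by simp
  have e2: "fold (\<lambda>x acc. h x \<circ> acc) xs (h x \<circ> g) = fold (\<lambda>x acc. h x \<circ> acc) xs id \<circ> (h x \<circ> g)"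
    by (rule Cons.IH)
  have e3: "fold (\<lambda>x acc. h x \<circ> acc) (x # xs) id = fold (\<lambda>x acc. h x \<circ> acc) xs (h x)" by simp
  have e4: "fold (\<lambda>x acc. h x \<circ> acc) xs (h x) = fold (\<lambda>x acc. h x \<circ> acc) xs id \<circ> h x"
    by (rule Cons.IH[of "h x"])
  show ?case unfolding e1 e2 e3 e4 by (simp add: comp_assoc)
qed

lemma fold_diag:
  "fold (\<lambda>x acc. diag_op (d x) \<circ> acc) xs id = diag_op (\<lambda>c. \<Prod>x\<leftarrow>xs. d x c)"
proof (induction xs rule: rev_induct)
  case Nil then show ?case by (simp add: diag_op_def fun_eq_iff)
next
  case (snoc x xs)
  then show ?case by (simp add: diag_op_def fun_eq_iff mult.commute)
qed

definition ent :: "nat \<Rightarrow> (nat \<Rightarrow> complex \<Rightarrow> complex \<Rightarrow> complex) \<Rightarrow> nat \<Rightarrow> nat \<Rightarrow> complex \<Rightarrow> complex \<Rightarrow> cfg \<Rightarrow> complex" where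
  "ent N b p p' x y c = (if c p = c p' \<and> c p < N then b (c p) x y else 1)"

lemma sum_eW: "(\<Sum>k<N. f k * eW k i c * eW k j c) = (if c i = c j \<and> c i < N then f (c i) else 0)"
proof -
  have "(\<Sum>k<N. f k * eW k i c * eW k j c) = (\<Sum>k<N. if k = c i then (if c i = c j then f k else 0) else 0)"
    by (rule sum.cong) (auto simp: eW_def)
  also have "\<dots> = (if c i = c j \<and> c i < N then f (c i) else 0)"
    by (simp add: sum.delta')
  finally show ?thesis .
qed

lemma two_site_diag: "two_site N b i j x y = diag_op (ent N b i j x y)"
proof -
  have "(\<Sum>k<N. eW k i c * eW k j c) = (if c i = c j \<and> c i < N then 1 else 0)" for c
    using sum_eW[where f="\<lambda>_. 1" and N=N and i=i and c=c and j=j] by simp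
  moreover have "(\<Sum>k<N. b k x y * eW k i c * eW k j c) = (if c i = c j \<and> c i < N then b (c i) x y else 0)" for c
    using sum_eW[where f="\<lambda>k. b k x y" and N=N and i=i and c=c and j=j] by simp
  ultimately show ?thesis
    unfolding two_site_def ent_def by (auto simp: fun_eq_iff diag_op_def)
qed

definition PP :: "nat \<Rightarrow> (nat \<times> nat) set" where
  "PP L = {(i,j). i < j \<and> j < L}"

definition Dg :: "nat \<Rightarrow> nat \<Rightarrow> (nat \<Rightarrow> complex \<Rightarrow> complex \<Rightarrow> complex) \<Rightarrow> (nat \<Rightarrow> complex)
    \<Rightarrow> (nat \<Rightarrow> nat) \<Rightarrow> cfg \<Rightarrow> complex" where
  "Dg N L sq \<xi> s c = (\<Prod>(i,j)\<in>PP L. ent N sq (s i) (s j) (\<xi> (s i)) (\<xi> (s j)) c)"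

lemma Nprod_diag: "Nprod N L sq \<xi> s = diag_op (Dg N L sq \<xi> s)"
proof -
  have row: "Nrow N L sq \<xi> s i = diag_op (\<lambda>c. \<Prod>j\<in>{Suc i..<L}. ent N sq (s i) (s j) (\<xi> (s i)) (\<xi> (s j)) c)" for i
    unfolding Nrow_def Nop_def two_site_diag fold_diag
    by (simp add: prod.distinct_set_conv_list[symmetric])
  have "Nprod N L sq \<xi> s = diag_op (\<lambda>c. \<Prod>i\<in>{0..<L}. \<Prod>j\<in>{Suc i..<L}. ent N sq (s i) (s j) (\<xi> (s i)) (\<xi> (s j)) c)"
    unfolding Nprod_def row fold_diag
    by (simp add: prod.distinct_set_conv_list[symmetric])
  also have "(\<lambda>c. \<Prod>i\<in>{0..<L}. \<Prod>j\<in>{Suc i..<L}. ent N sq (s i) (s j) (\<xi> (s i)) (\<xi> (s j)) c) = Dg N L sq \<xi> s"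
  proof
    fix c
    have "Sigma {0..<L} (\<lambda>i. {Suc i..<L}) = PP L" by (auto simp: PP_def)
    then show "(\<Prod>i\<in>{0..<L}. \<Prod>j\<in>{Suc i..<L}. ent N sq (s i) (s j) (\<xi> (s i)) (\<xi> (s j)) c) = Dg N L sq \<xi> s c"
      unfolding Dg_def by (subst prod.Sigma) auto
  qed
  finally show ?thesis .
qed

lemma perm_of_Cons: "perm_of (\<alpha> # r) = perm_of r \<circ> transpose \<alpha> (Suc \<alpha>)"
  unfolding perm_of_def by (simp add: fold_comp_gen[where g="transpose \<alpha> (Suc \<alpha>)"])

lemma Pperm_Cons: "Pperm (\<alpha> # r) = Pperm r \<circ> Pop \<alpha>"
  unfolding Pperm_def by (simp add: fold_comp_gen[where g="Pop \<alpha>"])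

lemma Pperm_apply: "Pperm xs v c = v (c \<circ> perm_of xs)"
proof (induction xs arbitrary: v c)
  case Nil then show ?case by (simp add: Pperm_def perm_of_def)
next
  case (Cons \<alpha> r)
  then show ?case by (simp add: Pperm_Cons perm_of_Cons Pop_def comp_def)
qed

fun Ech :: "nat \<Rightarrow> (nat \<Rightarrow> complex \<Rightarrow> complex \<Rightarrow> complex) \<Rightarrow> (nat \<Rightarrow> complex)
    \<Rightarrow> nat list \<Rightarrow> cfg \<Rightarrow> complex" where
  "Ech N a \<xi> [] c = 1"
| "Ech N a \<xi> (\<alpha> # r) c = ent N a (perm_of r \<alpha>) (perm_of r (Suc \<alpha>))
      (\<xi> (perm_of r \<alpha>)) (\<xi> (perm_of r (Suc \<alpha>))) c * Ech N a \<xi> r c"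

lemma transpose_twice: "c \<circ> transpose \<alpha> (Suc \<alpha>) \<circ> transpose \<alpha> (Suc \<alpha>) = c"
  by (simp add: fun_eq_iff transpose_def)

lemma chain_apply: "Rhat_chain N a \<xi> xs v (c \<circ> perm_of xs) = Ech N a \<xi> xs c * v c"
proof (induction xs arbitrary: c)
  case Nil then show ?case by (simp add: perm_of_def)
next
  case (Cons \<alpha> r)
  let ?q = "perm_of r"
  have "Rhat_chain N a \<xi> (\<alpha> # r) v (c \<circ> perm_of (\<alpha> # r))
     = two_site N a \<alpha> (Suc \<alpha>) (\<xi> (?q \<alpha>)) (\<xi> (?q (Suc \<alpha>))) (Rhat_chain N a \<xi> r v)
         (c \<circ> ?q \<circ> transpose \<alpha> (Suc \<alpha>) \<circ> transpose \<alpha> (Suc \<alpha>))"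
    by (simp add: perm_of_Cons Rhat_def Pop_def comp_assoc)
  also have "\<dots> = two_site N a \<alpha> (Suc \<alpha>) (\<xi> (?q \<alpha>)) (\<xi> (?q (Suc \<alpha>))) (Rhat_chain N a \<xi> r v)
         (c \<circ> ?q)" by (simp only: transpose_twice)
  also have "\<dots> = Ech N a \<xi> (\<alpha> # r) c * v c"
    by (simp add: two_site_diag diag_op_def Cons.IH ent_def)
  finally show ?case .
qed

lemma Rsig_apply: "Rsig N a \<xi> xs v c = Ech N a \<xi> xs c * v c"
  unfolding Rsig_def by (simp add: Pperm_apply chain_apply)

lemma inv_diag:
  assumes "\<And>c. d c \<noteq> 0"
  shows "inv (diag_op d) = diag_op (\<lambda>c. 1 / d c)"
  by (rule inv_unique_comp) (auto simp: fun_eq_iff diag_op_def assms)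

lemma pair_step:
  assumes sqa: "\<forall>k<N. \<forall>x y. (sq k x y)\<^sup>2 = a k x y"
    and sqi: "\<forall>k<N. \<forall>x y. sq k x y * sq k y x = 1"
  shows "ent N sq q p (\<xi> q) (\<xi> p) c * ent N a p q (\<xi> p) (\<xi> q) c = ent N sq p q (\<xi> p) (\<xi> q) c"
proof (cases "c p = c q \<and> c p < N")
  case True
  let ?k = "c p"
  have "sq ?k (\<xi> q) (\<xi> p) * a ?k (\<xi> p) (\<xi> q) = (sq ?k (\<xi> q) (\<xi> p) * sq ?k (\<xi> p) (\<xi> q)) * sq ?k (\<xi> p) (\<xi> q)"
    using sqa True by (simp add: power2_eq_square)
  also have "\<dots> = sq ?k (\<xi> p) (\<xi> q)" using sqi True by simp
  finally show ?thesis using True by (simp add: ent_def)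
next
  case False then show ?thesis by (auto simp: ent_def)
qed

lemma D_step:
  assumes sqa: "\<forall>k<N. \<forall>x y. (sq k x y)\<^sup>2 = a k x y"
    and sqi: "\<forall>k<N. \<forall>x y. sq k x y * sq k y x = 1"
    and L: "Suc \<alpha> < L"
  shows "Dg N L sq \<xi> (s \<circ> transpose \<alpha> (Suc \<alpha>)) c * ent N a (s \<alpha>) (s (Suc \<alpha>)) (\<xi> (s \<alpha>)) (\<xi> (s (Suc \<alpha>))) c
     = Dg N L sq \<xi> s c"
proof -
  define t where "t = transpose \<alpha> (Suc \<alpha>)"
  define h where "h = (\<lambda>(i,j). ent N sq (s i) (s j) (\<xi> (s i)) (\<xi> (s j)) c)"
  define P0 where "P0 = PP L - {(\<alpha>, Suc \<alpha>)}"
  have fin: "finite (PP L)"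
    by (rule finite_subset[of _ "{..<L} \<times> {..<L}"]) (auto simp: PP_def)
  have mem: "(\<alpha>, Suc \<alpha>) \<in> PP L" using L by (simp add: PP_def)
  have tt: "t (t x) = x" for x by (simp add: t_def transpose_def)
  have inP0: "map_prod t t b \<in> P0" if "b \<in> P0" for b
    using that L unfolding P0_def PP_def t_def transpose_def by (cases b) auto
  have D1: "Dg N L sq \<xi> (s \<circ> t) c = (\<Prod>b\<in>PP L. h (map_prod t t b))"
    unfolding Dg_def h_def by (rule prod.cong) auto
  also have "\<dots> = h (map_prod t t (\<alpha>, Suc \<alpha>)) * (\<Prod>b\<in>P0. h (map_prod t t b))"
    unfolding P0_def by (rule prod.remove[OF fin mem])
  also have "(\<Prod>b\<in>P0. h (map_prod t t b)) = (\<Prod>b\<in>P0. h b)"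
    by (rule prod.reindex_bij_witness[where i="map_prod t t" and j="map_prod t t"])
       (auto simp: tt inP0)
  finally have D1': "Dg N L sq \<xi> (s \<circ> t) c = h (Suc \<alpha>, \<alpha>) * (\<Prod>b\<in>P0. h b)"
    by (simp add: t_def del: comp_apply)
  have D2: "Dg N L sq \<xi> s c = h (\<alpha>, Suc \<alpha>) * (\<Prod>b\<in>P0. h b)"
    unfolding Dg_def h_def P0_def by (rule prod.remove[OF fin mem])
  have "h (Suc \<alpha>, \<alpha>) * ent N a (s \<alpha>) (s (Suc \<alpha>)) (\<xi> (s \<alpha>)) (\<xi> (s (Suc \<alpha>))) c = h (\<alpha>, Suc \<alpha>)"
    unfolding h_def using pair_step[OF sqa sqi] by simp
  then show ?thesis unfolding t_def[symmetric] D1' D2 by (simp add: algebra_simps)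
qed

lemma D_chain:
  assumes sqa: "\<forall>k<N. \<forall>x y. (sq k x y)\<^sup>2 = a k x y"
    and sqi: "\<forall>k<N. \<forall>x y. sq k x y * sq k y x = 1"
  shows "(\<forall>\<alpha>\<in>set xs. Suc \<alpha> < L) \<Longrightarrow> Dg N L sq \<xi> id c = Dg N L sq \<xi> (perm_of xs) c * Ech N a \<xi> xs c"
proof (induction xs)
  case Nil then show ?case by (simp add: perm_of_def)
next
  case (Cons \<alpha> r)
  have IH: "Dg N L sq \<xi> id c = Dg N L sq \<xi> (perm_of r) c * Ech N a \<xi> r c"
    using Cons.IH Cons.prems by (meson list.set_intros(2))
  have L: "Suc \<alpha> < L" using Cons.prems by simp
  show ?case
    unfolding IH perm_of_Cons Ech.simps
    using D_step[OF sqa sqi L, where s="perm_of r" and \<xi>=\<xi> and c=c] by (simp add: algebra_simps del: comp_apply)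
qed

lemma Dg_nz:
  assumes sqi: "\<forall>k<N. \<forall>x y. sq k x y * sq k y x = 1"
  shows "Dg N L sq \<xi> s c \<noteq> 0"
proof -
  have fin: "finite (PP L)"
    by (rule finite_subset[of _ "{..<L} \<times> {..<L}"]) (auto simp: PP_def)
  have "ent N sq p q x y c \<noteq> 0" for p q x y
  proof (cases "c p = c q \<and> c p < N")
    case True
    then have "sq (c p) x y * sq (c p) y x = 1" using sqi by blast
    then show ?thesis using True by (auto simp: ent_def)
  qed (auto simp: ent_def)
  then show ?thesis unfolding Dg_def using fin by (auto simp: prod_zero_iff)
qed

theorem proposition1:
  fixes N L :: nat
    and a sq :: "nat \<Rightarrow> complex \<Rightarrow> complex \<Rightarrow> complex"
    and \<xi> :: "nat \<Rightarrow> complex"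
    and \<sigma> :: "nat \<Rightarrow> nat"
    and \<alpha>s :: "nat list"
  assumes "N \<ge> 2" and "L \<ge> 1"
    and "\<forall>k<N. \<forall>x y. a k x y \<noteq> 0"
    and "\<forall>k<N. \<forall>x y. a k x y * a k y x = 1"
    and "\<forall>k<N. \<forall>x y. (sq k x y)\<^sup>2 = a k x y"
    and "\<forall>k<N. \<forall>x y. sq k x y * sq k y x = 1"
    and "\<sigma> permutes {..<L}"
    and "min_adj_decomp L \<sigma> \<alpha>s"
  shows "\<forall>v. \<forall>c\<in>cfgs N L.
           (inv (Nprod N L sq \<xi> \<sigma>) \<circ> Nprod N L sq \<xi> id) v c = Rsig N a \<xi> \<alpha>s v c"
proof (intro allI ballI)
  fix v c
  from assms(8) have dec: "\<forall>\<alpha>\<in>set \<alpha>s. Suc \<alpha> < L" and sig: "\<sigma> = perm_of \<alpha>s"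
    by (auto simp: min_adj_decomp_def adj_decomp_def)
  have nz: "\<And>c. Dg N L sq \<xi> \<sigma> c \<noteq> 0" using Dg_nz[OF assms(6)] by blast
  have "(inv (Nprod N L sq \<xi> \<sigma>) \<circ> Nprod N L sq \<xi> id) v c
      = Dg N L sq \<xi> id c * v c / Dg N L sq \<xi> \<sigma> c"
    unfolding Nprod_diag inv_diag[OF nz] by (simp add: diag_op_def)
  also have "\<dots> = Ech N a \<xi> \<alpha>s c * v c"
    using D_chain[OF assms(5) assms(6) dec, where \<xi>=\<xi> and c=c] nz[of c] sig by (simp add: field_simps)
  also have "\<dots> = Rsig N a \<xi> \<alpha>s v c" by (simp add: Rsig_apply)
  finally show "(inv (Nprod N L sq \<xi> \<sigma>) \<circ> Nprod N L sq \<xi> id) v c = Rsig N a \<xi> \<alpha>s v c" .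
qed

end
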